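(* Let $q\ge2$, let $r$ be a positive integer, and let $f$ be a positive real-valued function on the nonnegative integers that is $q$-quasimultiplicative with parameter $r$, i.e. $f(q^{k+r}a+b)=f(a)f(b)$ for all nonnegative integers $a,b,k$ with $0\le b<q^k$. Let $\mathcal{M}_k=\{0,1,\dots,q^k-1\}$ and $$F(x,t)=\sum_{k\ge0}x^k\sum_{n\in\mathcal{M}_k}f(n)^t.$$ Let $\mathcal{B}$ be the set of all positive integers not divisible by $q$ whose $q$-ary representation does not contain the block $0^r$, let $\ell(n)$ be the length of the $q$-ary representation of $n$, and $B(x,t)=\sum_{n\in\mathcal{B}}x^{\ell(n)}f(n)^t$. Then, as formal power series in $x$, $$F(x,t)=\frac{1}{1-x}\cdot\frac{1}{1-\frac{x^r}{1-x}B(x,t)}\Bigl(1+(1+x+\dots+x^{r-1})B(x,t)\Bigr)=\frac{1+(1+x+\dots+x^{r-1})B(x,t)}{1-x-x^rB(x,t)}.$$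
   Context: The $q$-ary representation of a positive integer has no leading zeros. *)

theory Defs
  imports Complex_Main "HOL-Library.Sublist" "HOL-Computational_Algebra.Formal_Power_Series"
begin

text \<open>q-ary digits of n, least significant digit first; no leading zeros (0 has the empty representation).\<close>
fun qdigits :: "nat \<Rightarrow> nat \<Rightarrow> nat list" where
  "qdigits q n = (if n = 0 \<or> q < 2 then [] else n mod q # qdigits q (n div q))"

declare qdigits.simps [simp del]

definition qlen :: "nat \<Rightarrow> nat \<Rightarrow> nat" where
  "qlen q n = length (qdigits q n)"

definition q_quasimultiplicative :: "nat \<Rightarrow> nat \<Rightarrow> (nat \<Rightarrow> real) \<Rightarrow> bool" where
  "q_quasimultiplicative q r f \<longleftrightarrow>
     (\<forall>a b k. b < q ^ k \<longrightarrow> f (q ^ (k + r) * a + b) = f a * f b)"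

definition blockset :: "nat \<Rightarrow> nat \<Rightarrow> nat set" where
  "blockset q r = {n. 0 < n \<and> \<not> q dvd n \<and> \<not> sublist (replicate r 0) (qdigits q n)}"

definition genF :: "nat \<Rightarrow> (nat \<Rightarrow> real) \<Rightarrow> real \<Rightarrow> real fps" where
  "genF q f t = Abs_fps (\<lambda>k. \<Sum>n\<in>{0..<q ^ k}. f n powr t)"

definition genB :: "nat \<Rightarrow> nat \<Rightarrow> (nat \<Rightarrow> real) \<Rightarrow> real \<Rightarrow> real fps" where
  "genB q r f t = Abs_fps (\<lambda>m. \<Sum>n\<in>{n\<in>blockset q r. qlen q n = m}. f n powr t)"

end

theory Submission
  imports Defs
begin

unbundle fps_syntax

lemma qdigits_pos: "q \<ge> 2 \<Longrightarrow> n > 0 \<Longrightarrow> qdigits q n = n mod q # qdigits q (n div q)"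
  by (subst qdigits.simps) auto

lemma qdigits_0: "qdigits q 0 = []"
  by (subst qdigits.simps) auto

lemma qlen_pos: "q \<ge> 2 \<Longrightarrow> n > 0 \<Longrightarrow> qlen q n = Suc (qlen q (n div q))"
  by (simp add: qlen_def qdigits_pos)

lemma qlen_0 [simp]: "qlen q 0 = 0"
  by (simp add: qlen_def qdigits_0)

lemma qlen_le_iff: "q \<ge> 2 \<Longrightarrow> qlen q n \<le> k \<longleftrightarrow> n < q ^ k"
proof (induction n arbitrary: k rule: less_induct)
  case (less n)
  show ?case
  proof (cases "n = 0")
    case True then show ?thesis using less.prems by simp
  next
    case False
    have lt: "n div q < n" using False less.prems by simp
    show ?thesis
    proof (cases k)
      case 0 then show ?thesis using False less.prems by (simp add: qlen_pos)
    next
      case (Suc k')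
      have "qlen q n \<le> k \<longleftrightarrow> n div q < q ^ k'"
        using less.IH[OF lt, of k'] False less.prems Suc by (simp add: qlen_pos)
      also have "\<dots> \<longleftrightarrow> n < q ^ k" using Suc less.prems
        by (simp add: less_mult_imp_div_less div_less_iff_less_mult mult.commute)
      finally show ?thesis .
    qed
  qed
qed

lemma qlen_eq_0: "q \<ge> 2 \<Longrightarrow> qlen q n = 0 \<longleftrightarrow> n = 0"
  using qlen_le_iff[of q n 0] by auto

lemma qlen_shift: "q \<ge> 2 \<Longrightarrow> c > 0 \<Longrightarrow> d < q ^ p \<Longrightarrow> qlen q (q ^ p * c + d) = qlen q c + p"
proof (induction p arbitrary: d)
  case 0 then show ?case by simp
next
  case (Suc p)
  have pos: "q ^ Suc p * c + d > 0" using Suc.prems by simp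
  have "(q ^ Suc p * c + d) div q = q ^ p * c + d div q"
    using Suc.prems by (simp add: div_add1_eq algebra_simps)
  moreover have "d div q < q ^ p" using Suc.prems by (simp add: div_less_iff_less_mult mult.commute)
  ultimately show ?case using Suc.IH[of "d div q"] Suc.prems pos by (simp add: qlen_pos)
qed

definition Zb :: "nat \<Rightarrow> nat \<Rightarrow> nat \<Rightarrow> bool" where
  "Zb q r n \<longleftrightarrow> (\<exists>i. n div q ^ i mod q ^ r = 0 \<and> q ^ r \<le> n div q ^ i)"

lemma prefix_zeros: "q \<ge> 2 \<Longrightarrow> prefix (replicate r 0) (qdigits q n) \<longleftrightarrow> r = 0 \<or> (n > 0 \<and> n mod q ^ r = 0)"
proof (induction r arbitrary: n)
  case 0 then show ?case by simp
next
  case (Suc r)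
  show ?case
  proof (cases "n = 0")
    case True then show ?thesis by (simp add: qdigits_0)
  next
    case False
    have "prefix (replicate (Suc r) 0) (qdigits q n) \<longleftrightarrow> n mod q = 0 \<and> (r = 0 \<or> (n div q > 0 \<and> n div q mod q ^ r = 0))"
      using Suc False by (simp add: qdigits_pos)
    also have "\<dots> \<longleftrightarrow> n mod q ^ Suc r = 0"
      using False Suc.prems by (auto simp: mod_mult2_eq mult.commute[of q] dvd_imp_le elim!: dvdE)
    finally show ?thesis using False by simp
  qed
qed

lemma sublist_zeros: "q \<ge> 2 \<Longrightarrow> r > 0 \<Longrightarrow> sublist (replicate r 0) (qdigits q n) \<longleftrightarrow> Zb q r n"
proof (induction n rule: less_induct)
  case (less n)
  show ?case
  proof (cases "n = 0")
    case True then show ?thesis using less.prems by (simp add: qdigits_0 Zb_def)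
  next
    case False
    have lt: "n div q < n" using False less.prems by simp
    have "sublist (replicate r 0) (qdigits q n) \<longleftrightarrow> n mod q ^ r = 0 \<or> Zb q r (n div q)"
    proof -
      have e: "qdigits q n = n mod q # qdigits q (n div q)" using less.prems False by (simp add: qdigits_pos)
      have "sublist (replicate r 0) (qdigits q n) \<longleftrightarrow> prefix (replicate r 0) (qdigits q n) \<or> sublist (replicate r 0) (qdigits q (n div q))"
        unfolding e sublist_Cons_right by simp
      then show ?thesis using less.IH[OF lt] less.prems False prefix_zeros[of q r n] by simp
    qed
    also have "\<dots> \<longleftrightarrow> Zb q r n"
    proof
      assume "n mod q ^ r = 0 \<or> Zb q r (n div q)"
      then show "Zb q r n"
      proof
        assume h: "n mod q ^ r = 0"
        then have "q ^ r \<le> n" using False by (auto elim!: dvdE simp: mod_eq_0_iff_dvd)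
        then show ?thesis using h unfolding Zb_def by (intro exI[of _ 0]) simp
      next
        assume "Zb q r (n div q)"
        then obtain i where "n div q div q ^ i mod q ^ r = 0 \<and> q ^ r \<le> n div q div q ^ i"
          unfolding Zb_def by (elim exE conjE) simp
        then show ?thesis unfolding Zb_def by (intro exI[of _ "Suc i"]) (simp add: div_mult2_eq)
      qed
    next
      assume "Zb q r n"
      then obtain i where i: "n div q ^ i mod q ^ r = 0" "q ^ r \<le> n div q ^ i" unfolding Zb_def by (elim exE conjE) simp
      show "n mod q ^ r = 0 \<or> Zb q r (n div q)"
      proof (cases i)
        case 0 then show ?thesis using i by simp
      next
        case (Suc j) then show ?thesis using i unfolding Zb_def
          by (intro disjI2 exI[of _ j]) (simp add: div_mult2_eq)
      qed
    qed
    finally show ?thesis .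
  qed
qed


definition Bar :: "nat \<Rightarrow> nat \<Rightarrow> nat \<Rightarrow> bool" where
  "Bar q r c \<longleftrightarrow> c > 0 \<and> \<not> q dvd c \<and> \<not> Zb q r c"

lemma blockset_eq: "q \<ge> 2 \<Longrightarrow> r > 0 \<Longrightarrow> blockset q r = {c. Bar q r c}"
  by (auto simp: blockset_def Bar_def sublist_zeros)

lemma pow_dvd_lemma:
  assumes "(q::nat) \<ge> 2" "e < r" "q ^ r dvd q ^ e * c" shows "q dvd c"
proof -
  have "q ^ r = q ^ e * q ^ (r - e)" using assms(2) by (simp flip: power_add)
  then have "q ^ (r - e) dvd c" using assms by simp
  moreover have "q dvd q ^ (r - e)" using assms(2) by (simp add: dvd_power)
  ultimately show ?thesis using dvd_trans by blast
qed

lemma div_pow_le: "(q::nat) > 0 \<Longrightarrow> i \<le> j \<Longrightarrow> (q ^ j * c) div q ^ i = q ^ (j - i) * c"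
proof -
  assume "q > 0" "i \<le> j"
  then have "q ^ j * c = q ^ i * (q ^ (j - i) * c)" by (simp add: mult.assoc flip: power_add)
  then have "(q ^ j * c) div q ^ i = (q ^ i * (q ^ (j - i) * c)) div q ^ i" by (rule arg_cong)
  then show ?thesis using \<open>q > 0\<close> by simp
qed

lemma div_pow_ge: "(q::nat) > 0 \<Longrightarrow> j \<le> i \<Longrightarrow> (q ^ j * c) div q ^ i = c div q ^ (i - j)"
proof -
  assume "q > 0" "j \<le> i"
  then have "q ^ i = q ^ j * q ^ (i - j)" by (simp flip: power_add)
  then show ?thesis using \<open>q > 0\<close> by (simp add: div_mult2_eq)
qed

lemma bar_step:
  assumes q: "q \<ge> 2" and r: "r > 0" and c: "Bar q r c" and j: "j < r" and a: "0 < a" "a < q"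
  shows "Bar q r (a + q * (q ^ j * c))"
proof -
  let ?n = "a + q * (q ^ j * c)"
  have "\<not> q dvd a" using a by (auto dest: dvd_imp_le)
  then have nq: "\<not> q dvd ?n" by (simp add: dvd_add_left_iff)
  have ndiv: "?n div q = q ^ j * c" using a q by simp
  have "\<not> Zb q r ?n"
  proof
    assume "Zb q r ?n"
    then obtain i where i: "?n div q ^ i mod q ^ r = 0" "q ^ r \<le> ?n div q ^ i"
      unfolding Zb_def by (elim exE conjE) simp
    show False
    proof (cases i)
      case 0
      then have "q ^ r dvd ?n" using i by (simp add: mod_eq_0_iff_dvd)
      moreover have "q dvd q ^ r" using r by (simp add: dvd_power)
      ultimately show False using nq dvd_trans by blast
    next
      case (Suc i')
      have e: "?n div q ^ i = (q ^ j * c) div q ^ i'"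
        using Suc ndiv by (simp add: div_mult2_eq)
      show False
      proof (cases "i' \<le> j")
        case True
        then have "q ^ r dvd q ^ (j - i') * c" using i e div_pow_le[of q i' j c] q by (simp add: mod_eq_0_iff_dvd)
        then have "q dvd c" using pow_dvd_lemma[of q "j - i'" r c] q j by simp
        then show False using c by (simp add: Bar_def)
      next
        case False
        then have "(q ^ j * c) div q ^ i' = c div q ^ (i' - j)" using div_pow_ge[of q j i' c] q by simp
        then have "Zb q r c" using i e unfolding Zb_def by (intro exI[of _ "i' - j"]) simp
        then show False using c by (simp add: Bar_def)
      qed
    qed
  qed
  then show ?thesis using nq a by (simp add: Bar_def)
qed

lemma decomp_ex:
  assumes q: "q \<ge> 2" and r: "r > 0"
  shows "n > 0 \<Longrightarrow> (\<exists>j c. j < r \<and> Bar q r c \<and> n = q ^ j * c) \<or>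
               (\<exists>p c d. r \<le> p \<and> Bar q r c \<and> d < q ^ (p - r) \<and> n = q ^ p * c + d)"
proof (induction n rule: less_induct)
  case (less n)
  have lt: "n div q < n" using less.prems q by simp
  show ?case
  proof (cases "q dvd n")
    case True
    then obtain n' where n': "n = q * n'" by blast
    have n'pos: "n' > 0" using n' less.prems by simp
    have "n' < n" using n' n'pos q by simp
    from less.IH[OF this n'pos] show ?thesis
    proof
      assume "\<exists>j c. j < r \<and> Bar q r c \<and> n' = q ^ j * c"
      then obtain j c where jc: "j < r" "Bar q r c" "n' = q ^ j * c" by blast
      show ?thesis
      proof (cases "Suc j < r")
        case True then show ?thesis using jc n' by (intro disjI1 exI[of _ "Suc j"] exI[of _ c]) simp
      next
        case False
        then have sj: "Suc j = r" using jc by simp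
        have "r \<le> Suc j \<and> Bar q r c \<and> (0::nat) < q ^ (Suc j - r) \<and> n = q ^ Suc j * c + 0"
          using sj jc n' by (simp flip: sj)
        then show ?thesis by blast
      qed
    next
      assume "\<exists>p c d. r \<le> p \<and> Bar q r c \<and> d < q ^ (p - r) \<and> n' = q ^ p * c + d"
      then obtain p c d where pcd: "r \<le> p" "Bar q r c" "d < q ^ (p - r)" "n' = q ^ p * c + d" by blast
      have "q * d < q ^ (Suc p - r)" using pcd q by (simp add: Suc_diff_le)
      then show ?thesis using pcd n'
        by (intro disjI2 exI[of _ "Suc p"] exI[of _ c] exI[of _ "q * d"]) (simp add: algebra_simps)
    qed
  next
    case False
    define a where "a = n mod q"
    define n' where "n' = n div q"
    have "a \<noteq> 0" using False by (auto simp: a_def mod_eq_0_iff_dvd)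
    then have a: "0 < a" "a < q" using q by (auto simp: a_def)
    have nn: "n = a + q * n'" by (simp add: a_def n'_def)
    show ?thesis
    proof (cases "n' = 0")
      case True
      then have "n = a" using nn by simp
      moreover have "\<not> Zb q r a"
      proof
        assume "Zb q r a"
        then obtain i where "q ^ r \<le> a div q ^ i" unfolding Zb_def by blast
        moreover have "a div q ^ i \<le> a" by simp
        moreover have "q \<le> q ^ r" using r q by (simp add: self_le_power)
        ultimately show False using a by simp
      qed
      ultimately show ?thesis using a False
        by (intro disjI1 exI[of _ 0] exI[of _ n]) (simp add: Bar_def r)
    next
      case n'0: False
      have "n' < n" using lt n'_def by simp
      from less.IH[OF this] n'0 have "(\<exists>j c. j < r \<and> Bar q r c \<and> n' = q ^ j * c) \<or>
               (\<exists>p c d. r \<le> p \<and> Bar q r c \<and> d < q ^ (p - r) \<and> n' = q ^ p * c + d)" by simp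
      then show ?thesis
      proof (elim disjE)
        assume "\<exists>j c. j < r \<and> Bar q r c \<and> n' = q ^ j * c"
        then obtain j c where jc: "j < r" "Bar q r c" "n' = q ^ j * c" by blast
        have "Bar q r n" using bar_step[OF q r jc(2) jc(1) a] jc nn by simp
        then show ?thesis by (intro disjI1 exI[of _ 0] exI[of _ n]) (simp add: r)
      next
        assume "\<exists>p c d. r \<le> p \<and> Bar q r c \<and> d < q ^ (p - r) \<and> n' = q ^ p * c + d"
        then obtain p c d where pcd: "r \<le> p" "Bar q r c" "d < q ^ (p - r)" "n' = q ^ p * c + d" by blast
        have "a + q * d < q ^ (Suc p - r)"
        proof -
          have "a + q * d < q * (d + 1)" using a by simp
          also have "\<dots> \<le> q * q ^ (p - r)" using pcd(3) by (intro mult_le_mono2) simp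
          finally show ?thesis using pcd(1) by (simp add: Suc_diff_le)
        qed
        then show ?thesis using pcd nn
          by (intro disjI2 exI[of _ "Suc p"] exI[of _ c] exI[of _ "a + q * d"]) (simp add: algebra_simps)
      qed
    qed
  qed
qed


lemma split_div:
  assumes "(q::nat) > 0" "r \<le> p" "d < q ^ (p - r)"
  shows "(q ^ p * c + d) div q ^ (p - r) = q ^ r * c"
proof -
  have h: "q ^ p * c + d = q ^ (p - r) * (q ^ r * c) + d" using assms(2) by (simp add: mult.assoc flip: power_add)
  have "(q ^ (p - r) * (q ^ r * c) + d) div q ^ (p - r) = q ^ r * c" using assms by simp
  then show ?thesis using h by metis
qed

lemma uniq1:
  assumes q: "q \<ge> 2" and c: "Bar q r c" and c': "Bar q r c'" and e: "q ^ j * c = q ^ j' * c'"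
  shows "j = j'"
proof -
  have key: "False" if "Bar q r x" "q ^ i * x = q ^ i' * y" "i < i'" for i i' x y
  proof -
    have "q ^ i' * y = q ^ i * (q ^ (i' - i) * y)" using \<open>i < i'\<close> by (simp add: mult.assoc flip: power_add)
    then have "q ^ i * x = q ^ i * (q ^ (i' - i) * y)" using that by simp
    then have "x = q ^ (i' - i) * y" using q by (subst (asm) mult_left_cancel) simp_all
    moreover have "q dvd q ^ (i' - i)" using \<open>i < i'\<close> by (simp add: dvd_power)
    ultimately have "q dvd x" by simp
    then show False using that by (simp add: Bar_def)
  qed
  show ?thesis
  proof (rule ccontr)
    assume "j \<noteq> j'"
    then show False using key[OF c e] key[OF c' e[symmetric]] by linarith
  qed
qed

lemma uniq2:
  assumes q: "q \<ge> 2" and c: "Bar q r c" and c': "Bar q r c'" and j: "j < r" and p: "r \<le> p"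
    and d: "d < q ^ (p - r)" and e: "q ^ j * c = q ^ p * c' + d"
  shows False
proof -
  define n where "n = q ^ j * c"
  have nd: "n div q ^ (p - r) = q ^ r * c'" using split_div[of q r p d c'] q p d e n_def by simp
  have jlt: "j < p - r"
  proof (rule ccontr)
    assume "\<not> j < p - r"
    then have "q ^ (p - r) dvd n" unfolding n_def
      by (simp add: le_imp_power_dvd dvd_mult2 not_less)
    moreover have "q ^ (p - r) dvd q ^ p * c'" by (simp add: le_imp_power_dvd dvd_mult2)
    ultimately have "q ^ (p - r) dvd d" using e n_def by (simp add: dvd_add_right_iff)
    then have "d = 0" using d by (auto dest: dvd_imp_le)
    then have "q ^ j * c = q ^ p * c'" using e by simp
    moreover have "j \<noteq> p" using j p by simp
    ultimately show False using uniq1[OF q c c'] by blast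
  qed
  have "c div q ^ (p - r - j) = n div q ^ (p - r)"
    unfolding n_def using div_pow_ge[of q j "p - r" c] q jlt by simp
  then have "c div q ^ (p - r - j) = q ^ r * c'" using nd by simp
  moreover have "c' > 0" using c' by (simp add: Bar_def)
  ultimately have "Zb q r c" unfolding Zb_def by (intro exI[of _ "p - r - j"]) simp
  then show False using c by (simp add: Bar_def)
qed

lemma uniq3_aux:
  assumes q: "q \<ge> 2" and c: "Bar q r c" and c': "Bar q r c'" and p: "r \<le> p" and p': "r \<le> p'"
    and d: "d < q ^ (p - r)" and d': "d' < q ^ (p' - r)" and e: "q ^ p * c + d = q ^ p' * c' + d'"
    and lt: "p < p'"
  shows False
proof -
  define n where "n = q ^ p * c + d"
  have dp: "d < q ^ p" using d q by (meson diff_le_self less_le_trans one_le_numeral power_increasing le_trans)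
  have cn: "c = n div q ^ p" unfolding n_def using dp q by simp
  have nd: "n div q ^ (p' - r) = q ^ r * c'" using split_div[of q r p' d' c'] q p' d' e n_def by simp
  have c'pos: "c' > 0" using c' by (simp add: Bar_def)
  show False
  proof (cases "p \<le> p' - r")
    case True
    have "p' - r = p + (p' - r - p)" using True by simp
    then have "q ^ (p' - r) = q ^ p * q ^ (p' - r - p)" by (metis power_add)
    then have "c div q ^ (p' - r - p) = n div q ^ (p' - r)"
      using cn by (simp add: div_mult2_eq)
    then have "Zb q r c" using nd c'pos unfolding Zb_def by (intro exI[of _ "p' - r - p"]) simp
    then show False using c by (simp add: Bar_def)
  next
    case False
    define e where "e = p - (p' - r)"
    have er: "e < r" "p = (p' - r) + e" using False lt p' unfolding e_def by auto
    have "c = (q ^ r * c') div q ^ e"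
      using cn nd er q by (simp add: div_mult2_eq power_add)
    also have "\<dots> = q ^ (r - e) * c'" using div_pow_le[of q e r c'] er q by simp
    finally have "q dvd c" using er by (simp add: dvd_power)
    then show False using c by (simp add: Bar_def)
  qed
qed

lemma uniq3:
  assumes q: "q \<ge> 2" and c: "Bar q r c" and c': "Bar q r c'" and p: "r \<le> p" and p': "r \<le> p'"
    and d: "d < q ^ (p - r)" and d': "d' < q ^ (p' - r)" and e: "q ^ p * c + d = q ^ p' * c' + d'"
  shows "p = p' \<and> c = c' \<and> d = d'"
proof -
  have pp: "p = p'"
    using uniq3_aux[OF q c c' p p' d d' e] uniq3_aux[OF q c' c p' p d' d e[symmetric]] by (metis linorder_neqE_nat)
  have dp: "d < q ^ p" using d q by (meson diff_le_self less_le_trans one_le_numeral power_increasing le_trans)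
  have dp': "d' < q ^ p" using d' q pp by (meson diff_le_self less_le_trans one_le_numeral power_increasing le_trans)
  have "c = (q ^ p * c + d) div q ^ p" using dp q by simp
  moreover have "c' = (q ^ p * c' + d') div q ^ p" using dp' q by simp
  moreover have "d = (q ^ p * c + d) mod q ^ p" using dp q by simp
  moreover have "d' = (q ^ p * c' + d') mod q ^ p" using dp' q by simp
  ultimately show ?thesis using e pp by metis
qed


lemma f_zero:
  assumes Q: "q_quasimultiplicative q r f" and fpos: "\<And>n. f n > 0"
  shows "f 0 = 1"
proof -
  have "f (q ^ (0 + r) * 0 + 0) = f 0 * f 0" using Q[unfolded q_quasimultiplicative_def, rule_format, of 0 0 0] by simp
  then have "f 0 * 1 = f 0 * f 0" by simp
  then show ?thesis using fpos[of 0] by (subst (asm) mult_left_cancel) simp_all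
qed

lemma f_shift:
  assumes q: "q \<ge> 2" and Q: "q_quasimultiplicative q r f" and fpos: "\<And>n. f n > 0"
  shows "f (q ^ j * c) = f c"
proof -
  have "f (q ^ (1 + r) * (q ^ j * c) + 1) = f (q ^ j * c) * f 1"
    using Q[unfolded q_quasimultiplicative_def, rule_format, where a="q ^ j * c" and b=1 and k=1] q by simp
  moreover have "f (q ^ (Suc j + r) * c + 1) = f c * f 1"
    using Q[unfolded q_quasimultiplicative_def, rule_format, where a=c and b=1 and k="Suc j"] q one_less_power[of q "Suc j"] by simp
  moreover have "q ^ (1 + r) * (q ^ j * c) = q ^ (Suc j + r) * c" by (simp add: power_add algebra_simps)
  ultimately have "f (q ^ j * c) * f 1 = f c * f 1" by metis
  then show ?thesis using fpos[of 1] by simp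
qed

lemma f_split:
  assumes Q: "q_quasimultiplicative q r f" and p: "r \<le> p" and d: "d < q ^ (p - r)"
  shows "f (q ^ p * c + d) = f c * f d"
proof -
  have "f (q ^ ((p - r) + r) * c + d) = f c * f d" using Q d unfolding q_quasimultiplicative_def by blast
  then show ?thesis using p by simp
qed

definition Bs :: "nat \<Rightarrow> nat \<Rightarrow> nat \<Rightarrow> nat set" where
  "Bs q r m = {n\<in>blockset q r. qlen q n = m}"

lemma Bs_finite: "q \<ge> 2 \<Longrightarrow> finite (Bs q r m)"
  by (rule finite_subset[of _ "{..<q ^ m}"]) (auto simp: Bs_def simp flip: qlen_le_iff)

lemma Bs_mem: "q \<ge> 2 \<Longrightarrow> r > 0 \<Longrightarrow> c \<in> Bs q r m \<longleftrightarrow> Bar q r c \<and> qlen q c = m"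
  by (simp add: Bs_def blockset_eq)

lemma Bs_0: "q \<ge> 2 \<Longrightarrow> r > 0 \<Longrightarrow> Bs q r 0 = {}"
  by (auto simp: Bs_mem qlen_eq_0 Bar_def)

lemma bij_decomp:
  assumes q: "q \<ge> 2" and r: "r > 0" and k: "k \<ge> 1"
  shows "bij_betw (case_sum (\<lambda>(j, c). q ^ j * c) (\<lambda>(i, c, d). q ^ (k - i) * c + d))
           (Sigma {..<r} (\<lambda>j. Bs q r (k - j)) <+> Sigma {0..k-r} (\<lambda>i. Bs q r i \<times> {0..<q ^ (k - i - r)}))
           {n. qlen q n = k}"
    (is "bij_betw ?h (?I1 <+> ?I2) ?S")
proof (rule bij_betw_imageI)
  show "inj_on ?h (?I1 <+> ?I2)"
  proof (rule inj_onI)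
    fix x y assume x: "x \<in> ?I1 <+> ?I2" and y: "y \<in> ?I1 <+> ?I2" and e: "?h x = ?h y"
    show "x = y"
    proof (cases x)
      case (Inl a)
      then obtain j c where xa: "x = Inl (j, c)" "j < r" "Bar q r c" "qlen q c = k - j"
        using x q r by (auto simp: Bs_mem)
      show ?thesis
      proof (cases y)
        case (Inl b)
        then obtain j' c' where yb: "y = Inl (j', c')" "j' < r" "Bar q r c'" "qlen q c' = k - j'"
          using y q r by (auto simp: Bs_mem)
        have ee: "q ^ j * c = q ^ j' * c'" using e xa yb by simp
        have "j = j'" using uniq1[OF q xa(3) yb(3) ee] .
        then have "c = c'" using ee q by simp
        then show ?thesis using xa yb \<open>j = j'\<close> by simp
      next
        case (Inr b)
        then obtain i c' d where yb: "y = Inr (i, c', d)" "i \<le> k - r" "Bar q r c'" "qlen q c' = i" "d < q ^ (k - i - r)"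
          using y q r by (auto simp: Bs_mem)
        have "i > 0" using yb q qlen_eq_0[of q c'] by (auto simp: Bar_def)
        then have pr: "r \<le> k - i" using yb by simp
        have ee: "q ^ j * c = q ^ (k - i) * c' + d" using e xa yb by simp
        show ?thesis using uniq2[OF q xa(3) yb(3) xa(2) pr yb(5) ee] by blast
      qed
    next
      case (Inr a)
      then obtain i c d where xa: "x = Inr (i, c, d)" "i \<le> k - r" "Bar q r c" "qlen q c = i" "d < q ^ (k - i - r)"
        using x q r by (auto simp: Bs_mem)
      have "i > 0" using xa q qlen_eq_0[of q c] by (auto simp: Bar_def)
      then have pr: "r \<le> k - i" using xa by simp
      show ?thesis
      proof (cases y)
        case (Inl b)
        then obtain j c' where yb: "y = Inl (j, c')" "j < r" "Bar q r c'" "qlen q c' = k - j"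
          using y q r by (auto simp: Bs_mem)
        have ee: "q ^ j * c' = q ^ (k - i) * c + d" using e xa yb by simp
        show ?thesis using uniq2[OF q yb(3) xa(3) yb(2) pr xa(5) ee] by blast
      next
        case (Inr b)
        then obtain i' c' d' where yb: "y = Inr (i', c', d')" "i' \<le> k - r" "Bar q r c'" "qlen q c' = i'" "d' < q ^ (k - i' - r)"
          using y q r by (auto simp: Bs_mem)
        have "i' > 0" using yb q qlen_eq_0[of q c'] by (auto simp: Bar_def)
        then have pr': "r \<le> k - i'" using yb by simp
        have ee: "q ^ (k - i) * c + d = q ^ (k - i') * c' + d'" using e xa yb by simp
        have "k - i = k - i' \<and> c = c' \<and> d = d'"
          using uniq3[OF q xa(3) yb(3) pr pr' xa(5) yb(5) ee] by blast
        then have h: "c = c'" "d = d'" by simp_all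
        have "i = i'" using xa(4) yb(4) h(1) by simp
        then show ?thesis using xa(1) yb(1) h by simp
      qed
    qed
  qed
next
  show "?h ` (?I1 <+> ?I2) = ?S"
  proof (intro equalityI subsetI)
    fix n assume "n \<in> ?h ` (?I1 <+> ?I2)"
    then obtain x where x: "x \<in> ?I1 <+> ?I2" and n: "n = ?h x" by blast
    show "n \<in> ?S"
    proof (cases x)
      case (Inl a)
      then obtain j c where xa: "x = Inl (j, c)" "j < r" "Bar q r c" "qlen q c = k - j"
        using x q r by (auto simp: Bs_mem)
      have "c > 0" using xa by (simp add: Bar_def)
      then have "qlen q c > 0" using q qlen_eq_0[of q c] by simp
      then have "qlen q (q ^ j * c + 0) = k" using qlen_shift[OF q \<open>c > 0\<close>, of 0 j] xa q by simp
      then show ?thesis using n xa by simp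
    next
      case (Inr a)
      then obtain i c d where xa: "x = Inr (i, c, d)" "i \<le> k - r" "Bar q r c" "qlen q c = i" "d < q ^ (k - i - r)"
        using x q r by (auto simp: Bs_mem)
      have "c > 0" using xa by (simp add: Bar_def)
      then have "i > 0" using xa q qlen_eq_0[of q c] by simp
      have "d < q ^ (k - i)"
        using xa(5) q by (meson diff_le_self less_le_trans one_le_numeral power_increasing le_trans)
      then have "qlen q (q ^ (k - i) * c + d) = k" using qlen_shift[OF q \<open>c > 0\<close>] xa \<open>i > 0\<close> by simp
      then show ?thesis using n xa by simp
    qed
  next
    fix n assume "n \<in> ?S"
    then have nk: "qlen q n = k" by simp
    then have "n > 0" using k q by (cases "n = 0") auto
    from decomp_ex[OF q r this] show "n \<in> ?h ` (?I1 <+> ?I2)"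
    proof (elim disjE exE conjE)
      fix j c assume jc: "j < r" "Bar q r c" "n = q ^ j * c"
      have "c > 0" using jc by (simp add: Bar_def)
      have "qlen q (q ^ j * c + 0) = qlen q c + j" using qlen_shift[OF q \<open>c > 0\<close>, of 0 j] q by simp
      then have "qlen q c = k - j" using nk jc by simp
      then have "Inl (j, c) \<in> ?I1 <+> ?I2" using jc q r by (auto simp: Bs_mem)
      moreover have "n = ?h (Inl (j, c))" using jc by simp
      ultimately show ?thesis by blast
    next
      fix p c d assume pcd: "r \<le> p" "Bar q r c" "d < q ^ (p - r)" "n = q ^ p * c + d"
      have "c > 0" using pcd by (simp add: Bar_def)
      have "d < q ^ p"
        using pcd(3) q by (meson diff_le_self less_le_trans one_le_numeral power_increasing le_trans)
      then have "qlen q n = qlen q c + p" using qlen_shift[OF q \<open>c > 0\<close>] pcd by simp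
      then have l: "qlen q c = k - p" "k - qlen q c = p" "qlen q c \<le> k - r" using nk pcd by auto
      then have "Inr (qlen q c, c, d) \<in> ?I1 <+> ?I2" using pcd q r by (auto simp: Bs_mem)
      moreover have "n = ?h (Inr (qlen q c, c, d))" using pcd l by simp
      ultimately show ?thesis by blast
    qed
  qed
qed


lemma sum_exact:
  assumes q: "q \<ge> 2" and r: "r > 0" and k: "k \<ge> 1"
    and Q: "q_quasimultiplicative q r f" and fpos: "\<And>n. f n > 0"
  shows "(\<Sum>n\<in>{n. qlen q n = k}. f n powr t) =
           (\<Sum>j<r. \<Sum>c\<in>Bs q r (k - j). f c powr t) +
           (\<Sum>i=0..k-r. (\<Sum>c\<in>Bs q r i. f c powr t) * (\<Sum>d\<in>{0..<q ^ (k - i - r)}. f d powr t))"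
proof -
  let ?g = "\<lambda>n. f n powr t"
  let ?h = "case_sum (\<lambda>(j, c). q ^ j * c) (\<lambda>(i, c, d). q ^ (k - i) * c + d)"
  let ?I1 = "Sigma {..<r} (\<lambda>j. Bs q r (k - j))"
  let ?I2 = "Sigma {0..k-r} (\<lambda>i. Bs q r i \<times> {0..<q ^ (k - i - r)})"
  have fin1: "finite ?I1" using q by (auto intro!: finite_SigmaI Bs_finite)
  have fin2: "finite ?I2" using q by (auto intro!: finite_SigmaI Bs_finite)
  have "(\<Sum>n\<in>{n. qlen q n = k}. ?g n) = (\<Sum>x\<in>?I1 <+> ?I2. ?g (?h x))"
    using sum.reindex_bij_betw[OF bij_decomp[OF q r k], of ?g] by simp
  also have "\<dots> = (\<Sum>x\<in>?I1. ?g (?h (Inl x))) + (\<Sum>x\<in>?I2. ?g (?h (Inr x)))"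
    using sum.Plus[OF fin1 fin2, of "\<lambda>x. ?g (?h x)"] by (simp only: comp_def)
  also have "(\<Sum>x\<in>?I1. ?g (?h (Inl x))) = (\<Sum>x\<in>?I1. ?g (snd x))"
  proof (rule sum.cong)
    fix x assume "x \<in> ?I1"
    then show "?g (?h (Inl x)) = ?g (snd x)" using f_shift[OF q Q fpos] by (cases x) simp
  qed simp
  also have "\<dots> = (\<Sum>j<r. \<Sum>c\<in>Bs q r (k - j). ?g c)"
    using q by (subst sum.Sigma) (auto intro: Bs_finite simp: case_prod_beta)
  also have "(\<Sum>x\<in>?I2. ?g (?h (Inr x))) = (\<Sum>x\<in>?I2. ?g (fst (snd x)) * ?g (snd (snd x)))"
  proof (rule sum.cong)
    fix x assume x: "x \<in> ?I2"
    obtain i c d where xe: "x = (i, c, d)" by (cases x) auto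
    have xi: "i \<le> k - r" "Bar q r c" "qlen q c = i" "d < q ^ (k - i - r)"
      using x xe q r by (auto simp: Bs_mem)
    have "i > 0" using xi q qlen_eq_0[of q c] by (auto simp: Bar_def)
    then have pr: "r \<le> k - i" using xi by simp
    have "f (q ^ (k - i) * c + d) = f c * f d" using f_split[OF Q pr xi(4)] .
    then show "?g (?h (Inr x)) = ?g (fst (snd x)) * ?g (snd (snd x))"
      using xe by (simp add: powr_mult)
  qed simp
  also have "\<dots> = (\<Sum>i=0..k-r. \<Sum>(c, d)\<in>Bs q r i \<times> {0..<q ^ (k - i - r)}. ?g c * ?g d)"
    using q by (subst sum.Sigma) (auto intro: Bs_finite simp: case_prod_beta)
  also have "\<dots> = (\<Sum>i=0..k-r. (\<Sum>c\<in>Bs q r i. ?g c) * (\<Sum>d\<in>{0..<q ^ (k - i - r)}. ?g d))"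
    by (simp add: sum_product sum.cartesian_product)
  finally show ?thesis .
qed


theorem proposition11:
  fixes q r :: nat and f :: "nat \<Rightarrow> real" and t :: real
  assumes "q \<ge> 2" and "r > 0"
    and "\<And>n. f n > 0"
    and "q_quasimultiplicative q r f"
  shows "genF q f t =
           inverse (1 - fps_X) * inverse (1 - fps_X ^ r * inverse (1 - fps_X) * genB q r f t)
             * (1 + (\<Sum>i<r. fps_X ^ i) * genB q r f t)
       \<and> genF q f t =
           (1 + (\<Sum>i<r. fps_X ^ i) * genB q r f t) / (1 - fps_X - fps_X ^ r * genB q r f t)"
proof -
  note q = assms(1) and r = assms(2) and fpos = assms(3) and Q = assms(4)
  define F where "F = genF q f t"
  define B where "B = genB q r f t"
  define N :: "real fps" where "N = 1 + (\<Sum>i<r. fps_X ^ i) * B"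
  define D :: "real fps" where "D = 1 - fps_X - fps_X ^ r * B"
  have Bn: "B $ m = (\<Sum>c\<in>Bs q r m. f c powr t)" for m by (simp add: B_def genB_def Bs_def)
  have Fn: "F $ k = (\<Sum>n\<in>{0..<q ^ k}. f n powr t)" for k by (simp add: F_def genF_def)
  have B0: "B $ 0 = 0" using Bn[of 0] Bs_0[OF q r] by simp
  have F0: "F $ 0 = 1" using Fn[of 0] f_zero[OF Q fpos] by simp
  have Frec: "F $ k = F $ (k - 1) + (\<Sum>n\<in>{n. qlen q n = k}. f n powr t)" if k: "k \<ge> 1" for k
  proof -
    have "{0..<q ^ k} = {0..<q ^ (k - 1)} \<union> {n. qlen q n = k}"
      using k by (auto simp flip: qlen_le_iff[OF q])
    moreover have "{0..<q ^ (k - 1)} \<inter> {n. qlen q n = k} = {}"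
      using k by (auto simp flip: qlen_le_iff[OF q])
    moreover have "finite {n. qlen q n = k}"
      by (rule finite_subset[of _ "{..<q ^ k}"]) (auto simp flip: qlen_le_iff[OF q])
    ultimately show ?thesis unfolding Fn by (simp add: sum.union_disjoint)
  qed
  have DF: "D * F = N"
  proof (rule fps_ext)
    fix k
    have lhs: "(D * F) $ k = F $ k - (if k = 0 then 0 else F $ (k - 1))
                 - (if k < r then 0 else (\<Sum>i=0..k-r. B $ i * F $ (k - r - i)))"
    proof -
      have "D * F = F - fps_X * F - fps_X ^ r * (B * F)" by (simp add: D_def algebra_simps)
      then have "(D * F) $ k = F $ k - (if k = 0 then 0 else F $ (k - 1))
                 - (if k < r then 0 else (B * F) $ (k - r))"
        by (simp only: fps_sub_nth fps_X_mult_nth fps_X_power_mult_nth)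
      then show ?thesis by (simp only: fps_mult_nth)
    qed
    have rhs: "N $ k = (if k = 0 then 1 else 0) + (\<Sum>j<r. B $ (k - j))"
    proof -
      have "N $ k = (if k = 0 then 1 else 0) + (\<Sum>j<r. (if k < j then 0 else B $ (k - j)))"
        unfolding N_def by (simp add: sum_distrib_right fps_sum_nth fps_X_power_mult_nth)
      also have "(\<Sum>j<r. (if k < j then 0 else B $ (k - j))) = (\<Sum>j<r. B $ (k - j))"
        by (rule sum.cong) (auto simp: B0)
      finally show ?thesis .
    qed
    show "(D * F) $ k = N $ k"
    proof (cases "k = 0")
      case True
      then show ?thesis using lhs rhs F0 B0 r by simp
    next
      case False
      then have k: "k \<ge> 1" by simp
      have se: "F $ k - F $ (k - 1) = (\<Sum>j<r. B $ (k - j)) + (\<Sum>i=0..k-r. B $ i * F $ (k - i - r))"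
        using Frec[OF k] sum_exact[OF q r k Q fpos, of t] unfolding Bn Fn by simp
      have "(\<Sum>i=0..k-r. B $ i * F $ (k - i - r)) = (if k < r then 0 else (\<Sum>i=0..k-r. B $ i * F $ (k - r - i)))"
        using B0 by (auto simp: diff_diff_left add.commute)
      then show ?thesis using lhs rhs se False by simp
    qed
  qed
  have D0: "D $ 0 = 1" using r by (simp add: D_def fps_X_power_mult_nth)
  have FN: "F = N * inverse D"
  proof -
    have "F = (inverse D * D) * F" using inverse_mult_eq_1[of D] D0 by simp
    also have "\<dots> = N * inverse D" using DF by (simp add: mult.assoc mult.commute)
    finally show ?thesis .
  qed
  have X0: "(1 - fps_X :: real fps) $ 0 \<noteq> 0" by simp
  have "(1 - fps_X) * (1 - fps_X ^ r * inverse (1 - fps_X) * B) = 1 - fps_X - fps_X ^ r * ((1 - fps_X) * inverse (1 - fps_X)) * B"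
    by (simp add: algebra_simps)
  also have "\<dots> = D" using inverse_mult_eq_1'[OF X0] by (simp add: D_def)
  finally have DD: "(1 - fps_X) * (1 - fps_X ^ r * inverse (1 - fps_X) * B) = D" .
  have "inverse (1 - fps_X) * inverse (1 - fps_X ^ r * inverse (1 - fps_X) * B) = inverse D"
    using DD fps_inverse_mult[of "1 - fps_X :: real fps"] by metis
  then have first: "F = inverse (1 - fps_X) * inverse (1 - fps_X ^ r * inverse (1 - fps_X) * B) * N"
    using FN by (simp add: mult.commute)
  have second: "F = N / D" using FN fps_divide_unit[of D N] D0 by simp
  show ?thesis using first second unfolding F_def B_def N_def D_def by simp
qed

end
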